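(* Let $q$ be a prime power and let $i,d,k,n,\bar{s}$ be positive integers with $1\leq i<\lfloor (d+1)/2\rfloor$, $d<k$, $n-(\bar{s}+1)k\geq d-i$, and $1\leq \bar{s}\leq q(q^{k-1}-1)/(q^{k-i}-1)$. Then: (i) $M_q(i;d,k,n)$ is an $\bar{s}^{\bar{e}_2}$-disjunct matrix, where $$\bar{e}_2=q^{(d-i)((\bar{s}+1)k-i)}\left[n-(\bar{s}+1)k\atop d-i\right]_q\left(q^{k-i}\left[k-1\atop i-1\right]_q-(\bar{s}-1)q^{k-i-1}\left[k-2\atop i-1\right]_q\right)-1;$$ (ii) with $q,i,d,k,\bar{s}$ fixed and $n\to+\infty$, $\lim_{n\to+\infty}\frac{\bar{e}_2+1}{\bar{e}_1+1}=+\infty$, where $\bar{e}_1=q^{k-d}\left[k-1\atop d-1\right]_q-(\bar{s}-1)q^{k-d-1}\left[k-2\atop d-1\right]_q-1$.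
   Context: $\mathbb{F}_q$ is the finite field with $q$ elements. For integers $m_1,m_2$ the Gaussian coefficient is $\left[m_2\atop m_1\right]_q=\prod_{t=m_2-m_1+1}^{m_2}(q^t-1)\big/\prod_{t=1}^{m_1}(q^t-1)$, with $\left[m_2\atop 0\right]_q=1$ and $\left[m_2\atop m_1\right]_q=0$ whenever $m_1<0$ or $m_2<m_1$. For $1\leq d<k<n$ and $\max\{0,d+k-n\}\leq i\leq d$, $M_q(i;d,k,n)$ is the binary matrix whose rows are indexed by the $d$-dimensional subspaces of $\mathbb{F}_q^n$ and whose columns are indexed by the $k$-dimensional subspaces of $\mathbb{F}_q^n$, with entry $M_q(A,B)=1$ iff $\dim(A\cap B)=i$. Viewing each column as the set of row indices where it has a 1-entry, a binary matrix is $s^e$-disjunct if for every column $C$ and every $s$ other columns $C_1,\dots,C_s$, the column $C$ has at least $e+1$ 1-entries not in $C_1\cup\cdots\cup C_s$. *)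

theory Defs
  imports Complex_Main "HOL-Library.Function_Algebras"
begin

text \<open>F_q^n is modelled as the functions nat => 'a vanishing outside {0..<n},
  where 'a is a finite field with q = CARD('a) elements.\<close>

definition fvec_scale :: "'a::field \<Rightarrow> (nat \<Rightarrow> 'a) \<Rightarrow> (nat \<Rightarrow> 'a)" where
  "fvec_scale c v = (\<lambda>j. c * v j)"

definition Fqn :: "nat \<Rightarrow> (nat \<Rightarrow> 'a::field) set" where
  "Fqn n = {v. \<forall>j\<ge>n. v j = 0}"

definition sdim :: "(nat \<Rightarrow> 'a::field) set \<Rightarrow> nat" where
  "sdim S = vector_space.dim fvec_scale S"

definition subspaces_of_dim :: "nat \<Rightarrow> nat \<Rightarrow> (nat \<Rightarrow> 'a::field) set set" where
  "subspaces_of_dim n m =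
     {S. S \<subseteq> Fqn n \<and> module.subspace fvec_scale S \<and> sdim S = m}"

definition Mq_entry :: "nat \<Rightarrow> (nat \<Rightarrow> 'a::field) set \<Rightarrow> (nat \<Rightarrow> 'a) set \<Rightarrow> bool" where
  "Mq_entry i A B \<longleftrightarrow> sdim (A \<inter> B) = i"

definition disjunct :: "'r set \<Rightarrow> 'c set \<Rightarrow> ('r \<Rightarrow> 'c \<Rightarrow> bool) \<Rightarrow> nat \<Rightarrow> real \<Rightarrow> bool" where
  "disjunct R Cols M s e \<longleftrightarrow>
     (\<forall>C\<in>Cols. \<forall>Cs. Cs \<subseteq> Cols \<and> C \<notin> Cs \<and> card Cs = s \<longrightarrow>
        e + 1 \<le> real (card {A\<in>R. M A C \<and> (\<forall>B\<in>Cs. \<not> M A B)}))"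

definition gauss :: "nat \<Rightarrow> int \<Rightarrow> int \<Rightarrow> real" where
  "gauss q m2 m1 = (if m1 < 0 \<or> m2 < m1 then 0 else
     (\<Prod>t\<in>{m2-m1+1..m2}. real q ^ nat t - 1) / (\<Prod>t\<in>{1..m1}. real q ^ nat t - 1))"

definition ebar2 :: "nat \<Rightarrow> nat \<Rightarrow> nat \<Rightarrow> nat \<Rightarrow> nat \<Rightarrow> nat \<Rightarrow> real" where
  "ebar2 q i d k n s =
     real q ^ ((d - i) * ((s + 1) * k - i)) * gauss q (int n - int (s + 1) * int k) (int d - int i)
     * (real q ^ (k - i) * gauss q (int k - 1) (int i - 1)
        - (real s - 1) * real q ^ (k - i - 1) * gauss q (int k - 2) (int i - 1)) - 1"

definition ebar1 :: "nat \<Rightarrow> nat \<Rightarrow> nat \<Rightarrow> nat \<Rightarrow> real" where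
  "ebar1 q d k s =
     real q ^ (k - d) * gauss q (int k - 1) (int d - 1)
     - (real s - 1) * real q ^ (k - d - 1) * gauss q (int k - 2) (int d - 1) - 1"

end

theory Submission
  imports Defs "HOL-Library.FuncSet" "HOL-Library.Cardinality"
begin


lemma vs_fvec: "vector_space (fvec_scale :: 'a::field \<Rightarrow> (nat\<Rightarrow>'a) \<Rightarrow> (nat\<Rightarrow>'a))"
  by unfold_locales (auto simp: fvec_scale_def fun_eq_iff algebra_simps)

global_interpretation fv: vector_space "fvec_scale :: 'a::field \<Rightarrow> (nat\<Rightarrow>'a) \<Rightarrow> (nat\<Rightarrow>'a)"
  by (rule vs_fvec)

lemma finite_span:
  fixes X :: "(nat \<Rightarrow> 'a::{field,finite}) set"
  assumes "finite X" shows "finite (fv.span X)"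
proof -
  have "fv.span X = (\<lambda>u. \<Sum>v\<in>X. fvec_scale (u v) v) ` (X \<rightarrow>\<^sub>E UNIV)"
  proof -
    have "fv.span X = range (\<lambda>u. \<Sum>v\<in>X. fvec_scale (u v) v)" by (rule fv.span_finite[OF assms])
    also have "\<dots> = (\<lambda>u. \<Sum>v\<in>X. fvec_scale (u v) v) ` (X \<rightarrow>\<^sub>E UNIV)"
    proof
      show "range (\<lambda>u. \<Sum>v\<in>X. fvec_scale (u v) v) \<subseteq> (\<lambda>u. \<Sum>v\<in>X. fvec_scale (u v) v) ` (X \<rightarrow>\<^sub>E UNIV)"
      proof
        fix y assume "y \<in> range (\<lambda>u. \<Sum>v\<in>X. fvec_scale (u v) v)"
        then obtain u where y: "y = (\<Sum>v\<in>X. fvec_scale (u v) v)" by auto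
        have "y = (\<Sum>v\<in>X. fvec_scale (restrict u X v) v)" unfolding y
          by (rule sum.cong) auto
        then show "y \<in> (\<lambda>u. \<Sum>v\<in>X. fvec_scale (u v) v) ` (X \<rightarrow>\<^sub>E UNIV)"
          by (intro image_eqI[of _ _ "restrict u X"]) auto
      qed
    qed auto
    finally show ?thesis .
  qed
  moreover have "finite (X \<rightarrow>\<^sub>E (UNIV :: 'a set))" using assms by (intro finite_PiE) auto
  ultimately show ?thesis by simp
qed

lemma card_span_insert:
  fixes X :: "(nat \<Rightarrow> 'a::{field,finite}) set"
  assumes "finite X" "w \<notin> fv.span X"
  shows "card (fv.span (insert w X)) = CARD('a) * card (fv.span X)"
proof -
  let ?f = "\<lambda>(c,x). x + fvec_scale c w"
  have eq: "fv.span (insert w X) = ?f ` (UNIV \<times> fv.span X)"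
  proof
    show "fv.span (insert w X) \<subseteq> ?f ` (UNIV \<times> fv.span X)"
    proof
      fix x assume "x \<in> fv.span (insert w X)"
      then obtain k where k: "x - fvec_scale k w \<in> fv.span X" unfolding fv.span_insert by auto
      have "x = ?f (k, x - fvec_scale k w)" by simp
      with k show "x \<in> ?f ` (UNIV \<times> fv.span X)" by blast
    qed
  next
    show "?f ` (UNIV \<times> fv.span X) \<subseteq> fv.span (insert w X)"
    proof clarify
      fix c x assume "x \<in> fv.span X"
      then have "x \<in> fv.span (insert w X)" using fv.span_mono[of X "insert w X"] by auto
      moreover have "fvec_scale c w \<in> fv.span (insert w X)"
        by (intro fv.span_scale fv.span_base) auto
      ultimately show "x + fvec_scale c w \<in> fv.span (insert w X)" by (rule fv.span_add)
    qed
  qed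
  have inj: "inj_on ?f (UNIV \<times> fv.span X)"
  proof (rule inj_onI, clarify)
    fix c x c' x'
    assume x: "x \<in> fv.span X" and x': "x' \<in> fv.span X"
      and e: "x + fvec_scale c w = x' + fvec_scale c' w"
    have "fvec_scale (c - c') w = x' - x"
      using e by (simp add: fv.scale_left_diff_distrib algebra_simps)
    also have "\<dots> \<in> fv.span X" by (rule fv.span_diff[OF x' x])
    finally have h: "fvec_scale (c - c') w \<in> fv.span X" .
    show "c = c' \<and> x = x'"
    proof (cases "c = c'")
      case True then show ?thesis using e by simp
    next
      case False
      then have "fvec_scale (inverse (c - c')) (fvec_scale (c - c') w) \<in> fv.span X"
        using h by (rule_tac fv.span_scale) 
      then have "w \<in> fv.span X" using False by simp
      then show ?thesis using assms by simp
    qed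
  qed
  have "card (fv.span (insert w X)) = card ((UNIV::'a set) \<times> fv.span X)"
    unfolding eq using inj by (simp add: card_image)
  also have "\<dots> = CARD('a) * card (fv.span X)" by (simp add: card_cartesian_product)
  finally show ?thesis .
qed

lemma card_span_indep:
  fixes B :: "(nat \<Rightarrow> 'a::{field,finite}) set"
  assumes "finite B" "fv.independent B"
  shows "card (fv.span B) = CARD('a) ^ card B"
  using assms
proof (induction B rule: finite_induct)
  case empty then show ?case by simp
next
  case (insert b B)
  then have "fv.independent B" "b \<notin> fv.span B" using fv.independent_insert[of b B] by auto
  then show ?case using insert card_span_insert[of B b] by simp
qed

lemma Fqn_subspace: "fv.subspace (Fqn n :: (nat \<Rightarrow> 'a::field) set)"
  unfolding fv.subspace_def Fqn_def by (auto simp: fvec_scale_def)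

lemma Fqn_Suc: "Fqn (Suc n) = (\<lambda>(c,v). v(n:=c)) ` ((UNIV :: 'a::field set) \<times> Fqn n)"
proof
  show "Fqn (Suc n) \<subseteq> (\<lambda>(c,v). v(n:=c)) ` ((UNIV :: 'a set) \<times> Fqn n)"
  proof
    fix x :: "nat \<Rightarrow> 'a" assume x: "x \<in> Fqn (Suc n)"
    have "x = (\<lambda>(c,v). v(n:=c)) (x n, x(n:=0))" by auto
    moreover have "x(n:=0) \<in> Fqn n" using x by (auto simp: Fqn_def)
    ultimately show "x \<in> (\<lambda>(c,v). v(n:=c)) ` ((UNIV :: 'a set) \<times> Fqn n)" by blast
  qed
qed (auto simp: Fqn_def)

lemma Fqn_finite_card: "finite (Fqn n :: (nat \<Rightarrow> 'a::{field,finite}) set) \<and> card (Fqn n :: (nat \<Rightarrow> 'a) set) = CARD('a) ^ n"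
proof (induction n)
  case 0
  have "Fqn 0 = {0 :: nat \<Rightarrow> 'a}" by (auto simp: Fqn_def)
  then show ?case by simp
next
  case (Suc n)
  have inj: "inj_on (\<lambda>(c,v). v(n:=c)) ((UNIV :: 'a set) \<times> Fqn n)"
  proof (rule inj_onI, clarify)
    fix c v c' v' assume "v \<in> Fqn n" "v' \<in> Fqn n" and e: "v(n := c) = v'(n := c')"
    then have "v n = 0" "v' n = 0" by (auto simp: Fqn_def)
    moreover have "c = c'" using fun_cong[OF e, of n] by simp
    ultimately show "c = c' \<and> v = v'" using e by (metis fun_upd_triv fun_upd_upd)
  qed
  show ?case unfolding Fqn_Suc using Suc inj
    by (simp add: card_image card_cartesian_product)
qed

lemma Fqn_finite: "finite (Fqn n :: (nat \<Rightarrow> 'a::{field,finite}) set)"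
  using Fqn_finite_card by blast

lemma Fqn_card: "card (Fqn n :: (nat \<Rightarrow> 'a::{field,finite}) set) = CARD('a) ^ n"
  using Fqn_finite_card by blast

lemma card_subspace:
  fixes S :: "(nat \<Rightarrow> 'a::{field,finite}) set"
  assumes "finite S" "fv.subspace S"
  shows "card S = CARD('a) ^ fv.dim S"
proof -
  obtain B where B: "B \<subseteq> S" "fv.independent B" "S \<subseteq> fv.span B" "card B = fv.dim S"
    by (rule fv.basis_exists)
  have "fv.span B = S" using B assms by (intro fv.span_subspace) auto
  moreover have "finite B" using B assms finite_subset by auto
  ultimately show ?thesis using card_span_indep[of B] B by simp
qed

lemma q_ge2: "CARD('a::{field,finite}) \<ge> 2"
proof -
  have "(0::'a) \<noteq> 1" by simp
  then have "card {0::'a, 1} = 2" by simp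
  moreover have "card {0::'a,1} \<le> CARD('a)" by (rule card_mono) auto
  ultimately show ?thesis by simp
qed

definition ind_over :: "(nat \<Rightarrow> 'a::{field,finite}) set \<Rightarrow> (nat \<Rightarrow> 'a) list \<Rightarrow> bool" where
  "ind_over U ws \<longleftrightarrow> card (fv.span (U \<union> set ws)) = card (fv.span U) * CARD('a) ^ length ws"

definition tuples :: "(nat \<Rightarrow> 'a::{field,finite}) set \<Rightarrow> (nat \<Rightarrow> 'a) set \<Rightarrow> nat \<Rightarrow> (nat \<Rightarrow> 'a) list set" where
  "tuples V U r = {ws. length ws = r \<and> set ws \<subseteq> V \<and> ind_over U ws}"

lemma card_span_step:
  fixes X :: "(nat \<Rightarrow> 'a::{field,finite}) set"
  assumes "finite X"
  shows "card (fv.span (insert w X)) = (if w \<in> fv.span X then card (fv.span X) else CARD('a) * card (fv.span X))"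
  using card_span_insert[OF assms] fv.span_redundant[of w X] by auto

lemma card_span_pos:
  fixes X :: "(nat \<Rightarrow> 'a::{field,finite}) set"
  assumes "finite X" shows "card (fv.span X) > 0"
  using finite_span[OF assms] fv.span_zero[of X] by (auto simp: card_gt_0_iff)

lemma card_span_le:
  fixes U :: "(nat \<Rightarrow> 'a::{field,finite}) set"
  assumes "finite U"
  shows "card (fv.span (U \<union> set ws)) \<le> card (fv.span U) * CARD('a) ^ length ws"
proof (induction ws)
  case Nil then show ?case by simp
next
  case (Cons w ws)
  have "U \<union> set (w # ws) = insert w (U \<union> set ws)" by auto
  then have "card (fv.span (U \<union> set (w # ws))) \<le> CARD('a) * card (fv.span (U \<union> set ws))"
    using card_span_step[of "U \<union> set ws" w] assms by auto
  also have "\<dots> \<le> CARD('a) * (card (fv.span U) * CARD('a) ^ length ws)"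
    using Cons by simp
  finally show ?case by (simp add: algebra_simps)
qed

lemma ind_over_Cons:
  fixes U :: "(nat \<Rightarrow> 'a::{field,finite}) set"
  assumes "finite U"
  shows "ind_over U (w # ws) \<longleftrightarrow> ind_over U ws \<and> w \<notin> fv.span (U \<union> set ws)"
proof -
  define a where "a = card (fv.span (U \<union> set ws))"
  define b where "b = card (fv.span U) * CARD('a) ^ length ws"
  have ab: "a \<le> b" unfolding a_def b_def by (rule card_span_le[OF assms])
  have bpos: "b > 0" unfolding b_def using card_span_pos[OF assms] q_ge2[where 'a='a] by simp
  have q2: "CARD('a) \<ge> 2" by (rule q_ge2)
  have e: "U \<union> set (w # ws) = insert w (U \<union> set ws)" by auto
  have new: "card (fv.span (U \<union> set (w # ws))) = (if w \<in> fv.span (U \<union> set ws) then a else CARD('a) * a)"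
    unfolding e a_def using card_span_step[of "U \<union> set ws" w] assms by auto
  have "ind_over U (w # ws) \<longleftrightarrow> card (fv.span (U \<union> set (w # ws))) = CARD('a) * b"
    unfolding ind_over_def b_def by (simp add: algebra_simps)
  also have "\<dots> \<longleftrightarrow> a = b \<and> w \<notin> fv.span (U \<union> set ws)"
  proof (cases "w \<in> fv.span (U \<union> set ws)")
    case True
    have "1 * b < CARD('a) * b" by (rule mult_strict_right_mono) (use q2 bpos in auto)
    then have "a < CARD('a) * b" using ab by linarith
    then show ?thesis using True new by auto
  next
    case False
    then show ?thesis using new q2 by auto
  qed
  finally show ?thesis unfolding ind_over_def a_def b_def by simp
qed

lemma finite_tuples: "finite V \<Longrightarrow> finite (tuples (V :: (nat \<Rightarrow> 'a::{field,finite}) set) U r)"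
proof -
  assume fV: "finite V"
  have "tuples V U r \<subseteq> {ws. set ws \<subseteq> V \<and> length ws = r}" unfolding tuples_def by auto
  moreover have "finite {ws. set ws \<subseteq> V \<and> length ws = r}"
    using fV by (intro finite_lists_length_eq) auto
  ultimately show ?thesis by (rule finite_subset)
qed

lemma tuples_Suc:
  fixes U :: "(nat \<Rightarrow> 'a::{field,finite}) set"
  assumes "finite U"
  shows "tuples V U (Suc r) = (\<lambda>(ws,w). w # ws) ` (SIGMA ws:tuples V U r. V - fv.span (U \<union> set ws))"
proof
  show "tuples V U (Suc r) \<subseteq> (\<lambda>(ws,w). w # ws) ` (SIGMA ws:tuples V U r. V - fv.span (U \<union> set ws))"
  proof
    fix xs assume xs: "xs \<in> tuples V U (Suc r)"
    then obtain w ws where xw: "xs = w # ws" unfolding tuples_def by (cases xs) auto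
    then show "xs \<in> (\<lambda>(ws,w). w # ws) ` (SIGMA ws:tuples V U r. V - fv.span (U \<union> set ws))"
      using xs ind_over_Cons[OF assms, of w ws] unfolding tuples_def by force
  qed
next
  show "(\<lambda>(ws,w). w # ws) ` (SIGMA ws:tuples V U r. V - fv.span (U \<union> set ws)) \<subseteq> tuples V U (Suc r)"
    using ind_over_Cons[OF assms] unfolding tuples_def by auto
qed

lemma card_tuples:
  fixes U V :: "(nat \<Rightarrow> 'a::{field,finite}) set"
  assumes U: "finite U" and V: "finite V" "fv.subspace V" and UV: "fv.span U \<subseteq> V"
  shows "real (card (tuples V U r)) = (\<Prod>t<r. real (card V) - real (card (fv.span U)) * real (CARD('a)) ^ t)"
proof (induction r)
  case 0
  have "tuples V U 0 = {[]}" unfolding tuples_def ind_over_def by auto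
  then show ?case by simp
next
  case (Suc r)
  have inj: "inj_on (\<lambda>(ws,w). w # ws) (SIGMA ws:tuples V U r. V - fv.span (U \<union> set ws))"
    by (rule inj_onI) auto
  have sub: "fv.span (U \<union> set ws) \<subseteq> V" if "ws \<in> tuples V U r" for ws
  proof (rule fv.span_minimal[OF _ V(2)])
    show "U \<union> set ws \<subseteq> V" using that UV fv.span_superset[of U] unfolding tuples_def by auto
  qed
  have cd: "card (V - fv.span (U \<union> set ws)) = card V - card (fv.span U) * CARD('a) ^ r"
    if "ws \<in> tuples V U r" for ws
    using that sub[OF that] V(1) card_Diff_subset[of "fv.span (U \<union> set ws)" V] finite_subset[OF sub[OF that]]
    unfolding tuples_def ind_over_def by auto
  have "card (tuples V U (Suc r)) = card (SIGMA ws:tuples V U r. V - fv.span (U \<union> set ws))"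
    unfolding tuples_Suc[OF U] by (rule card_image[OF inj])
  also have "\<dots> = (\<Sum>ws\<in>tuples V U r. card (V - fv.span (U \<union> set ws)))"
    by (rule card_SigmaI) (use finite_tuples V(1) in auto)
  also have "\<dots> = card (tuples V U r) * (card V - card (fv.span U) * CARD('a) ^ r)"
    using cd by simp
  finally have e: "card (tuples V U (Suc r)) = card (tuples V U r) * (card V - card (fv.span U) * CARD('a) ^ r)" .
  show ?case
  proof (cases "tuples V U r = {}")
    case True
    then have "(\<Prod>t<r. real (card V) - real (card (fv.span U)) * real (CARD('a)) ^ t) = 0"
      using Suc.IH by simp
    then show ?thesis using e True by simp
  next
    case False
    then obtain ws where ws: "ws \<in> tuples V U r" by auto
    have "card (fv.span (U \<union> set ws)) \<le> card V" using card_mono[OF V(1) sub[OF ws]] .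
    then have le: "card (fv.span U) * CARD('a) ^ r \<le> card V" using ws unfolding tuples_def ind_over_def by simp
    have "real (card (tuples V U (Suc r))) = real (card (tuples V U r)) * (real (card V) - real (card (fv.span U)) * real (CARD('a)) ^ r)"
      unfolding e using le by (simp add: of_nat_diff)
    then show ?thesis using Suc.IH by simp
  qed
qed

lemma ind_over_mono:
  fixes U U' :: "(nat \<Rightarrow> 'a::{field,finite}) set"
  assumes U: "finite U" and U': "finite U'" and sub: "fv.span U' \<subseteq> fv.span U"
  shows "ind_over U ws \<Longrightarrow> ind_over U' ws"
proof (induction ws)
  case Nil then show ?case by (simp add: ind_over_def)
next
  case (Cons w ws)
  then have h: "ind_over U ws" "w \<notin> fv.span (U \<union> set ws)" using ind_over_Cons[OF U] by auto
  have "fv.span (U' \<union> set ws) \<subseteq> fv.span (U \<union> set ws)"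
  proof (rule fv.span_minimal)
    have "U' \<subseteq> fv.span U" using sub fv.span_superset[of U'] by auto
    also have "\<dots> \<subseteq> fv.span (U \<union> set ws)" by (rule fv.span_mono) auto
    finally show "U' \<union> set ws \<subseteq> fv.span (U \<union> set ws)" using fv.span_superset[of "U \<union> set ws"] by auto
  qed auto
  then show ?case using Cons h ind_over_Cons[OF U'] by auto
qed

lemma ind_over_inter:
  fixes U I :: "(nat \<Rightarrow> 'a::{field,finite}) set"
  assumes U: "finite U" and I: "fv.span I \<subseteq> fv.span U"
  shows "ind_over U ws \<Longrightarrow> x \<in> fv.span (I \<union> set ws) \<Longrightarrow> x \<in> fv.span U \<Longrightarrow> x \<in> fv.span I"
proof (induction ws arbitrary: x)
  case Nil then show ?case by simp
next
  case (Cons w ws)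
  then have h: "ind_over U ws" "w \<notin> fv.span (U \<union> set ws)" using ind_over_Cons[OF U] by auto
  have "x \<in> fv.span (insert w (I \<union> set ws))" using Cons.prems by simp
  then obtain c where c: "x - fvec_scale c w \<in> fv.span (I \<union> set ws)" unfolding fv.span_insert by auto
  have IU: "fv.span (I \<union> set ws) \<subseteq> fv.span (U \<union> set ws)"
  proof (rule fv.span_minimal)
    have "I \<subseteq> fv.span U" using I fv.span_superset[of I] by auto
    also have "\<dots> \<subseteq> fv.span (U \<union> set ws)" by (rule fv.span_mono) auto
    finally show "I \<union> set ws \<subseteq> fv.span (U \<union> set ws)" using fv.span_superset[of "U \<union> set ws"] by auto
  qed auto
  show ?case
  proof (cases "c = 0")
    case True
    then have "x \<in> fv.span (I \<union> set ws)" using c by simp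
    then show ?thesis using Cons.IH h Cons.prems by auto
  next
    case False
    have x1: "x \<in> fv.span (U \<union> set ws)" using Cons.prems(3) fv.span_mono[of U "U \<union> set ws"] by auto
    have "fvec_scale c w = x - (x - fvec_scale c w)" by simp
    also have "\<dots> \<in> fv.span (U \<union> set ws)" by (rule fv.span_diff) (use x1 c IU in auto)
    finally have "fvec_scale (inverse c) (fvec_scale c w) \<in> fv.span (U \<union> set ws)" by (rule fv.span_scale)
    then have "w \<in> fv.span (U \<union> set ws)" using False by simp
    then show ?thesis using h by simp
  qed
qed

lemma dim_from_card:
  fixes S :: "(nat \<Rightarrow> 'a::{field,finite}) set"
  assumes "finite S" "fv.subspace S" "card S = CARD('a) ^ m"
  shows "fv.dim S = m"
proof -
  have "CARD('a) ^ fv.dim S = CARD('a) ^ m" using card_subspace[OF assms(1,2)] assms(3) by simp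
  then show ?thesis using q_ge2[where 'a='a] by (simp add: power_inject_exp)
qed

lemma subspace_extend:
  fixes X C :: "(nat \<Rightarrow> 'a::{field,finite}) set"
  assumes C: "finite C" "fv.subspace C" and X: "fv.subspace X" "X \<subseteq> C"
    and cX: "card X = CARD('a) ^ a" and cC: "card C = CARD('a) ^ c" and am: "a \<le> m" and mc: "m \<le> c"
  shows "\<exists>H. fv.subspace H \<and> X \<subseteq> H \<and> H \<subseteq> C \<and> card H = CARD('a) ^ m"
  using am mc
proof (induction m)
  case 0 then show ?case using X cX by auto
next
  case (Suc m)
  show ?case
  proof (cases "a = Suc m")
    case True then show ?thesis using X cX by blast
  next
    case False
    then have am': "a \<le> m" and mc': "m < c" using Suc.prems by auto
    then obtain H where H: "fv.subspace H" "X \<subseteq> H" "H \<subseteq> C" "card H = CARD('a) ^ m" using Suc.IH by auto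
    have q2: "CARD('a) \<ge> 2" by (rule q_ge2)
    have "CARD('a) ^ m < CARD('a) ^ c" using mc' q2 by (intro power_strict_increasing) auto
    then have "H \<noteq> C" using H cC by auto
    then obtain w where w: "w \<in> C" "w \<notin> H" using H by auto
    have fH: "finite H" using H C finite_subset by auto
    have spH: "fv.span H = H" using H by simp
    define H' where "H' = fv.span (insert w H)"
    have "card H' = CARD('a) * card H" unfolding H'_def using card_span_insert[OF fH, of w] w spH by simp
    moreover have "H' \<subseteq> C" unfolding H'_def using w H C by (intro fv.span_minimal) auto
    moreover have "X \<subseteq> H'" unfolding H'_def using H fv.span_superset[of "insert w H"] by auto
    ultimately show ?thesis using H unfolding H'_def by (intro exI[of _ "fv.span (insert w H)"]) auto
  qed
qed

lemma card_inter_bound: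
  fixes A B C :: "(nat \<Rightarrow> 'a::{field,finite}) set"
  assumes C: "finite C" and Cs: "fv.subspace C" and A: "fv.subspace A" "A \<subseteq> C" and B: "fv.subspace B" "B \<subseteq> C"
  shows "card A * card B \<le> card C * card (A \<inter> B)"
proof -
  let ?g = "\<lambda>(a,b). a - b"
  have fA: "finite A" and fB: "finite B" using A B C finite_subset by auto
  have fib: "card {p \<in> A \<times> B. ?g p = c} \<le> card (A \<inter> B)" for c
  proof (cases "{p \<in> A \<times> B. ?g p = c} = {}")
    case True then show ?thesis by (metis card.empty zero_le)
  next
    case False
    then obtain a0 b0 where ab0: "a0 \<in> A" "b0 \<in> B" "a0 - b0 = c" by auto
    have "inj_on (\<lambda>(a,b). a - a0) {p \<in> A \<times> B. ?g p = c}"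
      by (rule inj_onI) (auto simp: algebra_simps)
    moreover have "(\<lambda>(a,b). a - a0) ` {p \<in> A \<times> B. ?g p = c} \<subseteq> A \<inter> B"
    proof
      fix y assume "y \<in> (\<lambda>(a,b). a - a0) ` {p \<in> A \<times> B. ?g p = c}"
      then obtain a b where ab: "a \<in> A" "b \<in> B" "a - b = c" and y: "y = a - a0" by auto
      have "a - a0 \<in> A" using ab ab0 A by (simp add: fv.subspace_diff)
      moreover have "a - a0 = b - b0" using ab ab0 by (simp add: algebra_simps)
      moreover have "b - b0 \<in> B" using ab ab0 B by (simp add: fv.subspace_diff)
      ultimately show "y \<in> A \<inter> B" using y by simp
    qed
    ultimately show ?thesis by (rule card_inj_on_le) (use fA fB in auto)
  qed
  have "A \<times> B = (\<Union>c\<in>?g ` (A \<times> B). {p \<in> A \<times> B. ?g p = c})" by auto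
  then have "card (A \<times> B) \<le> (\<Sum>c\<in>?g ` (A \<times> B). card {p \<in> A \<times> B. ?g p = c})"
    using card_UN_le[of "?g ` (A \<times> B)" "\<lambda>c. {p \<in> A \<times> B. ?g p = c}"] fA fB by simp
  also have "\<dots> \<le> (\<Sum>c\<in>?g ` (A \<times> B). card (A \<inter> B))" by (intro sum_mono fib)
  also have "\<dots> = card (?g ` (A \<times> B)) * card (A \<inter> B)" by simp
  also have "\<dots> \<le> card C * card (A \<inter> B)"
  proof (intro mult_right_mono card_mono[OF C])
    show "?g ` (A \<times> B) \<subseteq> C" using A B Cs by (auto intro!: fv.subspace_diff)
  qed simp
  finally show ?thesis by (simp add: card_cartesian_product)
qed

lemma card_span_Un_le:
  fixes X Y :: "(nat \<Rightarrow> 'a::{field,finite}) set"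
  assumes "finite X" "finite Y"
  shows "card (fv.span (X \<union> Y)) \<le> card (fv.span X) * card (fv.span Y)"
proof -
  have "fv.span (X \<union> Y) = (\<lambda>(x,y). x + y) ` (fv.span X \<times> fv.span Y)"
    unfolding fv.span_Un by auto
  moreover have "card ((\<lambda>(x,y). x + y) ` (fv.span X \<times> fv.span Y)) \<le> card (fv.span X \<times> fv.span Y)"
    by (rule card_image_le) (simp add: finite_span assms)
  ultimately show ?thesis by (simp add: card_cartesian_product)
qed

lemma card_span_UN_le:
  fixes X :: "(nat \<Rightarrow> 'a::{field,finite}) set" and F :: "(nat \<Rightarrow> 'a) set set"
  assumes "finite X" "finite F" "\<And>B. B \<in> F \<Longrightarrow> finite B"
  shows "card (fv.span (X \<union> \<Union>F)) \<le> card (fv.span X) * (\<Prod>B\<in>F. card (fv.span B))"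
  using assms(2,3)
proof (induction F rule: finite_induct)
  case empty then show ?case by simp
next
  case (insert B F)
  have e: "X \<union> \<Union>(insert B F) = (X \<union> \<Union>F) \<union> B" by auto
  have "card (fv.span (X \<union> \<Union>(insert B F))) \<le> card (fv.span (X \<union> \<Union>F)) * card (fv.span B)"
    unfolding e using insert assms(1) by (intro card_span_Un_le) auto
  also have "\<dots> \<le> card (fv.span X) * (\<Prod>B\<in>F. card (fv.span B)) * card (fv.span B)"
    using insert by (intro mult_right_mono) auto
  finally show ?case using insert by (simp add: algebra_simps)
qed

definition ff :: "real \<Rightarrow> nat \<Rightarrow> nat \<Rightarrow> real" where
  "ff q m r = (\<Prod>t<r. q ^ m - q ^ t)"

lemma card_tuples0:
  fixes V :: "(nat \<Rightarrow> 'a::{field,finite}) set"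
  assumes "finite V" "fv.subspace V" "card V = CARD('a) ^ m"
  shows "real (card (tuples V {} r)) = ff (real CARD('a)) m r"
  using card_tuples[of "{}" V r] assms fv.subspace_0[OF assms(2)] by (simp add: ff_def)

lemma tuples_mono: "V \<subseteq> V' \<Longrightarrow> tuples V U r \<subseteq> tuples V' U r"
  unfolding tuples_def by auto

lemma sod_facts:
  fixes S :: "(nat \<Rightarrow> 'a::{field,finite}) set"
  assumes "S \<in> subspaces_of_dim n m"
  shows "finite S" "fv.subspace S" "card S = CARD('a) ^ m" "S \<subseteq> Fqn n"
proof -
  show f: "finite S" and sub: "fv.subspace S" and "S \<subseteq> Fqn n"
    using assms Fqn_finite finite_subset unfolding subspaces_of_dim_def by auto
  show "card S = CARD('a) ^ m" using card_subspace[OF f sub] assms unfolding subspaces_of_dim_def sdim_def by auto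
qed

lemma goodT_bound:
  fixes C :: "(nat \<Rightarrow> 'a::{field,finite}) set" and Cs :: "(nat \<Rightarrow> 'a) set set"
  assumes C: "C \<in> subspaces_of_dim n k" and Cs: "Cs \<subseteq> subspaces_of_dim n k" "C \<notin> Cs" "card Cs = s" "s \<ge> 1"
    and k2: "k \<ge> 2"
  shows "real (card {bs \<in> tuples C {} i. \<forall>B\<in>Cs. \<not> set bs \<subseteq> B})
     \<ge> ff (real CARD('a)) k i - ff (real CARD('a)) (k-1) i - (real s - 1) * (ff (real CARD('a)) (k-1) i - ff (real CARD('a)) (k-2) i)"
proof -
  define Q where "Q = CARD('a)"
  define q where "q = real Q"
  have Q2: "Q \<ge> 2" unfolding Q_def by (rule q_ge2)
  note Cf = sod_facts[OF C]
  have Bf: "finite B" "fv.subspace B" "card B = Q ^ k" if "B \<in> Cs" for B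
    using sod_facts[of B n k] that Cs unfolding Q_def by auto
  have fCs: "finite Cs" using Cs(3,4) by (metis card.infinite not_one_le_zero)
  have "\<forall>B\<in>Cs. \<exists>H. fv.subspace H \<and> C \<inter> B \<subseteq> H \<and> H \<subseteq> C \<and> card H = Q ^ (k-1)"
  proof
    fix B assume B: "B \<in> Cs"
    have sI: "fv.subspace (C \<inter> B)" using Cf Bf[OF B] by (simp add: fv.subspace_inter)
    have fI: "finite (C \<inter> B)" using Cf by simp
    have "C \<inter> B \<noteq> C"
    proof
      assume "C \<inter> B = C"
      then have "C \<subseteq> B" by auto
      then have "C = B" using card_subset_eq[OF Bf(1)[OF B]] Cf Bf[OF B] by (auto simp: Q_def)
      then show False using B Cs by auto
    qed
    then have "card (C \<inter> B) < card C" using Cf by (intro psubset_card_mono) auto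
    then have "Q ^ fv.dim (C \<inter> B) < Q ^ k" using card_subspace[OF fI sI] Cf unfolding Q_def by simp
    then have "fv.dim (C \<inter> B) < k" using Q2 by (simp add: power_strict_increasing_iff)
    then show "\<exists>H. fv.subspace H \<and> C \<inter> B \<subseteq> H \<and> H \<subseteq> C \<and> card H = Q ^ (k-1)"
      using subspace_extend[OF Cf(1,2) sI _ card_subspace[OF fI sI], of k "k-1"] Cf unfolding Q_def by auto
  qed
  then obtain H where H: "\<And>B. B \<in> Cs \<Longrightarrow> fv.subspace (H B) \<and> C \<inter> B \<subseteq> H B \<and> H B \<subseteq> C \<and> card (H B) = Q ^ (k-1)"
    by metis
  have Hf: "finite (H B)" if "B \<in> Cs" for B using H[OF that] Cf finite_subset by blast
  obtain B1 where B1: "B1 \<in> Cs" using Cs(3,4) by fastforce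
  define T where "T = tuples C {} i"
  define Tg where "Tg = {bs \<in> tuples C {} i. \<forall>B\<in>Cs. \<not> set bs \<subseteq> B}"
  define X where "X B = tuples (H B) {} i" for B
  have cT: "real (card T) = ff q k i" unfolding T_def q_def Q_def by (rule card_tuples0[OF Cf(1,2,3)])
  have cX: "real (card (X B)) = ff q (k-1) i" if "B \<in> Cs" for B
    unfolding X_def q_def Q_def using H[OF that] Hf[OF that] by (intro card_tuples0) (auto simp: Q_def)
  have fX: "finite (X B)" if "B \<in> Cs" for B unfolding X_def using Hf[OF that] by (rule finite_tuples)
  have bad: "T - Tg \<subseteq> X B1 \<union> (\<Union>B\<in>Cs - {B1}. X B - X B1)"
  proof
    fix bs assume bs: "bs \<in> T - Tg"
    then obtain B where B: "B \<in> Cs" "set bs \<subseteq> B" unfolding T_def Tg_def by auto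
    have "set bs \<subseteq> C" using bs unfolding T_def tuples_def by auto
    then have "set bs \<subseteq> H B" using B H[OF B(1)] by auto
    then have "bs \<in> X B" using bs unfolding X_def T_def tuples_def by auto
    then show "bs \<in> X B1 \<union> (\<Union>B\<in>Cs - {B1}. X B - X B1)" using B by (cases "B = B1") auto
  qed
  have diff: "real (card (X B - X B1)) \<le> ff q (k-1) i - ff q (k-2) i" if B: "B \<in> Cs" for B
  proof -
    have sI: "fv.subspace (H B \<inter> H B1)" using H[OF B] H[OF B1] by (simp add: fv.subspace_inter)
    have fI: "finite (H B \<inter> H B1)" using Hf[OF B] by simp
    have "card (H B) * card (H B1) \<le> card C * card (H B \<inter> H B1)"
      using H[OF B] H[OF B1] Cf by (intro card_inter_bound) auto
    then have "Q ^ (k-1) * Q ^ (k-1) \<le> Q ^ k * Q ^ fv.dim (H B \<inter> H B1)"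
      using H[OF B] H[OF B1] Cf card_subspace[OF fI sI] unfolding Q_def by simp
    then have "Q ^ (k - 1 + (k - 1)) \<le> Q ^ (k + fv.dim (H B \<inter> H B1))" by (simp add: power_add)
    then have "k - 1 + (k - 1) \<le> k + fv.dim (H B \<inter> H B1)" using Q2 by (simp add: power_increasing_iff)
    then have g: "k - 2 \<le> fv.dim (H B \<inter> H B1)" using k2 by linarith
    obtain K where K: "fv.subspace K" "K \<subseteq> H B \<inter> H B1" "card K = Q ^ (k-2)"
      using subspace_extend[OF fI sI, of "{0}" 0 "fv.dim (H B \<inter> H B1)" "k-2"] g card_subspace[OF fI sI]
        fv.subspace_0[OF sI] unfolding Q_def by auto
    have fK: "finite K" using K fI finite_subset by blast
    have cK: "real (card (tuples K {} i)) = ff q (k-2) i"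
      unfolding q_def Q_def using K fK by (intro card_tuples0) (auto simp: Q_def)
    have KX: "tuples K {} i \<subseteq> X B" "tuples K {} i \<subseteq> X B1" unfolding X_def using K by (auto intro!: tuples_mono)
    have "card (X B - X B1) \<le> card (X B - tuples K {} i)"
      using KX fX[OF B] by (intro card_mono) auto
    also have "\<dots> = card (X B) - card (tuples K {} i)"
      using KX fX[OF B] by (intro card_Diff_subset) (auto intro: finite_subset)
    finally have "real (card (X B - X B1)) \<le> real (card (X B) - card (tuples K {} i))" by simp
    also have "\<dots> = real (card (X B)) - real (card (tuples K {} i))"
      using KX fX[OF B] by (intro of_nat_diff card_mono) auto
    finally show ?thesis using cX[OF B] cK by simp
  qed
  have "real (card (T - Tg)) \<le> real (card (X B1 \<union> (\<Union>B\<in>Cs - {B1}. X B - X B1)))"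
    using bad fX fCs B1 by (intro of_nat_mono card_mono) auto
  also have "\<dots> \<le> real (card (X B1)) + real (card (\<Union>B\<in>Cs - {B1}. X B - X B1))"
    using card_Un_le[of "X B1" "\<Union>B\<in>Cs - {B1}. X B - X B1"] by linarith
  also have "real (card (\<Union>B\<in>Cs - {B1}. X B - X B1)) \<le> (\<Sum>B\<in>Cs - {B1}. real (card (X B - X B1)))"
  proof -
    have "card (\<Union>B\<in>Cs - {B1}. X B - X B1) \<le> (\<Sum>B\<in>Cs - {B1}. card (X B - X B1))"
      using fCs by (intro card_UN_le) auto
    then show ?thesis by (simp add: of_nat_sum[symmetric] del: of_nat_sum)
  qed
  also have "\<dots> \<le> (\<Sum>B\<in>Cs - {B1}. ff q (k-1) i - ff q (k-2) i)"
    by (intro sum_mono diff) auto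
  also have "\<dots> = (real s - 1) * (ff q (k-1) i - ff q (k-2) i)"
    using B1 fCs Cs(3,4) by (simp add: card_Diff_singleton of_nat_diff)
  finally have "real (card (T - Tg)) \<le> ff q (k-1) i + (real s - 1) * (ff q (k-1) i - ff q (k-2) i)"
    using cX[OF B1] by simp
  moreover have "card (T - Tg) = card T - card Tg" using Cf(1)
    unfolding T_def Tg_def by (intro card_Diff_subset) (auto intro: finite_tuples finite_subset)
  moreover have "card Tg \<le> card T" using Cf(1)
    unfolding T_def Tg_def by (intro card_mono) (auto intro: finite_tuples)
  ultimately have "real (card T) - real (card Tg) \<le> ff q (k-1) i + (real s - 1) * (ff q (k-1) i - ff q (k-2) i)"
    by (simp add: of_nat_diff)
  then show ?thesis using cT unfolding Tg_def q_def Q_def by simp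
qed



lemma good_bound:
  fixes C :: "(nat \<Rightarrow> 'a::{field,finite}) set" and Cs :: "(nat \<Rightarrow> 'a) set set"
  assumes C: "C \<in> subspaces_of_dim n k" and Cs: "Cs \<subseteq> subspaces_of_dim n k" "C \<notin> Cs" "card Cs = s" "s \<ge> 1"
    and id: "i \<le> d" and nK: "(s+1)*k + (d - i) \<le> n"
  shows "real (card {bs \<in> tuples C {} i. \<forall>B\<in>Cs. \<not> set bs \<subseteq> B}) * (\<Prod>t<d-i. real CARD('a) ^ n - real CARD('a) ^ ((s+1)*k) * real CARD('a) ^ t)
     \<le> real (card {A\<in>subspaces_of_dim n d. Mq_entry i A C \<and> (\<forall>B\<in>Cs. \<not> Mq_entry i A B)})
        * (ff (real CARD('a)) i i * (\<Prod>t<d-i. real CARD('a) ^ d - real CARD('a) ^ i * real CARD('a) ^ t))"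
proof -
  define Q where "Q = CARD('a)"
  define q where "q = real Q"
  define r where "r = d - i"
  define K where "K = (s+1)*k"
  have Q2: "Q \<ge> 2" unfolding Q_def by (rule q_ge2)
  note Cf = sod_facts[OF C]
  have Bf: "finite B" "fv.subspace B" "card B = Q ^ k" "B \<subseteq> Fqn n" if "B \<in> Cs" for B
    using sod_facts[of B n k] that Cs unfolding Q_def by auto
  have fCs: "finite Cs" using Cs(3,4) by (metis card.infinite not_one_le_zero)
  define U where "U = C \<union> \<Union>Cs"
  have fU: "finite U" unfolding U_def using Cf Bf fCs by auto
  have UU: "U \<subseteq> fv.span U" by (rule fv.span_superset)
  have CU: "C \<subseteq> fv.span U" using UU unfolding U_def by auto
  have BU: "\<And>B. B \<in> Cs \<Longrightarrow> B \<subseteq> fv.span U" using UU unfolding U_def by auto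
  have UV: "fv.span U \<subseteq> Fqn n"
    unfolding U_def using Cf(4) Bf(4) by (intro fv.span_minimal Fqn_subspace) blast+
  have "card (fv.span U) \<le> card (fv.span C) * (\<Prod>B\<in>Cs. card (fv.span B))"
    unfolding U_def using Cf Bf fCs by (intro card_span_UN_le) auto
  also have "\<dots> = Q ^ k * (\<Prod>B\<in>Cs. Q ^ k)"
  proof -
    have sC: "fv.span C = C" using Cf(2) by simp
    have sB: "fv.span B = B" if "B \<in> Cs" for B using Bf(2)[OF that] by simp
    have "(\<Prod>B\<in>Cs. card (fv.span B)) = (\<Prod>B\<in>Cs. Q ^ k)"
      by (rule prod.cong[OF refl]) (simp add: sB Bf(3))
    then show ?thesis unfolding sC using Cf(3) by (simp add: Q_def)
  qed
  also have "\<dots> = Q ^ k * (Q ^ k) ^ s" using Cs(3) by simp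
  also have "\<dots> = Q ^ K"
  proof -
    have "K = k + k * s" unfolding K_def by simp
    then show ?thesis by (simp only: power_add power_mult)
  qed
  finally have cU: "card (fv.span U) \<le> Q ^ K" .
  define Tg where "Tg = {bs \<in> tuples C {} i. \<forall>B\<in>Cs. \<not> set bs \<subseteq> B}"
  define W where "W = tuples (Fqn n) U r"
  define P where "P = Tg \<times> W"
  define Phi where "Phi p = fv.span (set (fst p) \<union> set (snd p))" for p :: "(nat \<Rightarrow> 'a) list \<times> (nat \<Rightarrow> 'a) list"
  define Good where "Good = {A\<in>subspaces_of_dim n d. Mq_entry i A C \<and> (\<forall>B\<in>Cs. \<not> Mq_entry i A B)}"
  have fTg: "finite Tg" unfolding Tg_def by (rule finite_subset[OF _ finite_tuples[OF Cf(1), of "{}" i]]) blast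
  have fW: "finite W" unfolding W_def by (rule finite_tuples[OF Fqn_finite])
  have "real (card W) = (\<Prod>t<r. real (card (Fqn n :: (nat \<Rightarrow> 'a) set)) - real (card (fv.span U)) * real Q ^ t)"
    unfolding W_def Q_def by (rule card_tuples[OF fU Fqn_finite Fqn_subspace UV])
  also have "\<dots> \<ge> (\<Prod>t<r. q ^ n - q ^ K * q ^ t)"
  proof (rule prod_mono)
    fix t assume t: "t \<in> {..<r}"
    have "q ^ K * q ^ t = q ^ (K + t)" by (simp add: power_add)
    also have "\<dots> \<le> q ^ n" unfolding q_def using Q2 t nK by (intro power_increasing) (auto simp: r_def K_def)
    finally have h1: "0 \<le> q ^ n - q ^ K * q ^ t" by simp
    have "real (card (fv.span U)) \<le> q ^ K" unfolding q_def using cU by (metis of_nat_le_iff of_nat_power)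
    then have h2: "q ^ n - q ^ K * q ^ t \<le> real (card (Fqn n :: (nat \<Rightarrow> 'a) set)) - real (card (fv.span U)) * real Q ^ t"
      unfolding q_def using Fqn_card[where 'a='a] by (simp add: Q_def mult_right_mono)
    show "0 \<le> q ^ n - q ^ K * q ^ t \<and> q ^ n - q ^ K * q ^ t \<le> real (card (Fqn n :: (nat \<Rightarrow> 'a) set)) - real (card (fv.span U)) * real Q ^ t"
      using h1 h2 by blast
  qed
  finally have cW: "(\<Prod>t<r. q ^ n - q ^ K * q ^ t) \<le> real (card W)" .
  have key: "Phi p \<in> subspaces_of_dim n d \<and> Phi p \<inter> C = fv.span (set (fst p)) \<and> card (fv.span (set (fst p))) = Q ^ i
       \<and> card (Phi p) = Q ^ d \<and> (\<forall>B\<in>Cs. Phi p \<inter> B = fv.span (set (fst p)) \<inter> B)" if p: "p \<in> P" for p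
  proof -
    obtain bs ws where pe: "p = (bs, ws)" by (cases p)
    have bs: "length bs = i" "set bs \<subseteq> C" "ind_over {} bs" "\<forall>B\<in>Cs. \<not> set bs \<subseteq> B"
      using p unfolding pe P_def Tg_def tuples_def by auto
    have ws: "length ws = r" "set ws \<subseteq> Fqn n" "ind_over U ws"
      using p unfolding pe P_def W_def tuples_def by auto
    define I where "I = fv.span (set bs)"
    have cI: "card I = Q ^ i" using bs unfolding I_def ind_over_def Q_def by simp
    have IC: "I \<subseteq> C" unfolding I_def using bs Cf by (intro fv.span_minimal) auto
    have IU: "fv.span (set bs) \<subseteq> fv.span U" using IC CU unfolding I_def by auto
    have wsI: "ind_over (set bs) ws" using ind_over_mono[OF fU _ IU ws(3)] by simp
    have cA: "card (Phi p) = Q ^ d"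
      using wsI bs ws id unfolding Phi_def pe ind_over_def r_def Q_def
      by (simp add: cI[unfolded I_def Q_def] power_add[symmetric])
    have AV: "Phi p \<subseteq> Fqn n" unfolding Phi_def pe using bs ws Cf by (intro fv.span_minimal Fqn_subspace) auto
    have fA: "finite (Phi p)" using AV Fqn_finite finite_subset by blast
    have sA: "fv.subspace (Phi p)" unfolding Phi_def by simp
    have dA: "fv.dim (Phi p) = d" using dim_from_card[OF fA sA] cA unfolding Q_def by simp
    have AinU: "x \<in> I" if "x \<in> Phi p" "x \<in> fv.span U" for x
      using ind_over_inter[OF fU IU ws(3)] that unfolding Phi_def pe I_def by auto
    have IA: "I \<subseteq> Phi p" unfolding Phi_def pe I_def by (intro fv.span_mono) auto
    have AC: "Phi p \<inter> C = I" using AinU CU IA IC by auto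
    have AB: "Phi p \<inter> B = I \<inter> B" if "B \<in> Cs" for B using AinU BU[OF that] IA by auto
    show ?thesis using AC AB cI cA AV sA dA unfolding pe I_def subspaces_of_dim_def sdim_def by auto
  qed
  have img: "Phi ` P \<subseteq> Good"
  proof
    fix A assume "A \<in> Phi ` P"
    then obtain p where p: "p \<in> P" "A = Phi p" by auto
    note kp = key[OF p(1)]
    define I where "I = fv.span (set (fst p))"
    have "I \<subseteq> C" using kp unfolding I_def by blast
    then have fI: "finite I" using Cf(1) by (rule finite_subset)
    have sI: "fv.subspace I" unfolding I_def by simp
    have dI: "fv.dim I = i" using dim_from_card[OF fI sI] kp unfolding I_def Q_def by simp
    have nB: "fv.dim (I \<inter> B) \<noteq> i" if B: "B \<in> Cs" for B
    proof
      assume h: "fv.dim (I \<inter> B) = i"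
      have sIB: "fv.subspace (I \<inter> B)" using sI Bf[OF B] by (simp add: fv.subspace_inter)
      have "card (I \<inter> B) = Q ^ i" using card_subspace[OF _ sIB] fI h unfolding Q_def by simp
      then have "I \<inter> B = I" using fI kp card_subset_eq[of I "I \<inter> B"] unfolding I_def by auto
      moreover have "\<not> set (fst p) \<subseteq> B" using p B unfolding P_def Tg_def by (cases p) auto
      then obtain b where "b \<in> set (fst p)" "b \<notin> B" by auto
      moreover have "set (fst p) \<subseteq> I" unfolding I_def by (rule fv.span_superset)
      ultimately show False by auto
    qed
    show "A \<in> Good" using kp dI nB unfolding Good_def Mq_entry_def sdim_def p(2) I_def by auto
  qed
  have fib: "real (card {p \<in> P. Phi p = A}) \<le> ff q i i * (\<Prod>t<r. q ^ d - q ^ i * q ^ t)" if A: "A \<in> Phi ` P" for A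
  proof -
    obtain p0 where p0: "p0 \<in> P" "A = Phi p0" using A by auto
    note k0 = key[OF p0(1)]
    have AC: "A \<inter> C = fv.span (set (fst p0))" and cAC: "card (A \<inter> C) = Q ^ i" and cA: "card A = Q ^ d"
      using k0 p0 by auto
    have fA: "finite A" and sA: "fv.subspace A" using k0 p0 sod_facts[of A n d] by auto
    have fAC: "finite (A \<inter> C)" using fA by simp
    have sAC: "fv.subspace (A \<inter> C)" using AC by simp
    have sub: "{p \<in> P. Phi p = A} \<subseteq> tuples (A \<inter> C) {} i \<times> tuples A (A \<inter> C) r"
    proof
      fix p assume pp: "p \<in> {p \<in> P. Phi p = A}"
      then have pP: "p \<in> P" and pA: "Phi p = A" by auto
      note kp = key[OF pP]
      obtain bs ws where pe: "p = (bs, ws)" by (cases p)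
      have bs: "length bs = i" "set bs \<subseteq> C" "ind_over {} bs"
        using pP unfolding pe P_def Tg_def tuples_def by auto
      have ws: "length ws = r" "ind_over U ws"
        using pP unfolding pe P_def W_def tuples_def by auto
      have ACe: "A \<inter> C = fv.span (set bs)" using kp pA pe by auto
      have "set bs \<subseteq> A \<inter> C" unfolding ACe by (rule fv.span_superset)
      moreover have "set ws \<subseteq> A" using pA fv.span_superset[of "set bs \<union> set ws"] unfolding Phi_def pe by auto
      moreover have "ind_over (A \<inter> C) ws"
      proof (rule ind_over_mono[OF fU fAC _ ws(2)])
        have "fv.span (A \<inter> C) = A \<inter> C" using sAC by simp
        then show "fv.span (A \<inter> C) \<subseteq> fv.span U" using CU by blast
      qed
      ultimately show "p \<in> tuples (A \<inter> C) {} i \<times> tuples A (A \<inter> C) r"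
        using bs ws unfolding pe tuples_def by auto
    qed
    have "card {p \<in> P. Phi p = A} \<le> card (tuples (A \<inter> C) {} i \<times> tuples A (A \<inter> C) r)"
      by (rule card_mono[OF _ sub]) (intro finite_cartesian_product finite_tuples fAC fA)
    then have h: "card {p \<in> P. Phi p = A} \<le> card (tuples (A \<inter> C) {} i) * card (tuples A (A \<inter> C) r)"
      by (simp add: card_cartesian_product)
    have "real (card {p \<in> P. Phi p = A}) \<le> real (card (tuples (A \<inter> C) {} i) * card (tuples A (A \<inter> C) r))"
      by (rule of_nat_mono[OF h])
    then have "real (card {p \<in> P. Phi p = A}) \<le> real (card (tuples (A \<inter> C) {} i)) * real (card (tuples A (A \<inter> C) r))"
      by simp
    also have "real (card (tuples (A \<inter> C) {} i)) = ff q i i"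
      unfolding q_def Q_def by (rule card_tuples0[OF fAC sAC cAC[unfolded Q_def]])
    also have "real (card (tuples A (A \<inter> C) r)) = (\<Prod>t<r. q ^ d - q ^ i * q ^ t)"
    proof -
      have spAC: "fv.span (A \<inter> C) = A \<inter> C" using sAC by simp
      have "real (card (tuples A (A \<inter> C) r)) = (\<Prod>t<r. real (card A) - real (card (fv.span (A \<inter> C))) * real CARD('a) ^ t)"
        by (rule card_tuples[OF fAC fA sA]) (simp only: spAC, blast)
      also have "\<dots> = (\<Prod>t<r. q ^ d - q ^ i * q ^ t)" unfolding spAC cAC cA q_def Q_def by simp
      finally show ?thesis .
    qed
    finally show ?thesis .
  qed
  have "real (card P) \<le> (\<Sum>A\<in>Phi ` P. real (card {p \<in> P. Phi p = A}))"
  proof -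
    have "P = (\<Union>A\<in>Phi ` P. {p \<in> P. Phi p = A})" by auto
    then have "card P \<le> (\<Sum>A\<in>Phi ` P. card {p \<in> P. Phi p = A})"
      using card_UN_le[of "Phi ` P" "\<lambda>A. {p \<in> P. Phi p = A}"] fTg fW unfolding P_def by simp
    then show ?thesis by (simp add: of_nat_sum[symmetric] del: of_nat_sum)
  qed
  also have "\<dots> \<le> (\<Sum>A\<in>Phi ` P. ff q i i * (\<Prod>t<r. q ^ d - q ^ i * q ^ t))"
    by (intro sum_mono fib)
  also have "\<dots> = real (card (Phi ` P)) * (ff q i i * (\<Prod>t<r. q ^ d - q ^ i * q ^ t))" by simp
  also have "\<dots> \<le> real (card Good) * (ff q i i * (\<Prod>t<r. q ^ d - q ^ i * q ^ t))"
  proof (rule mult_right_mono)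
    have fG: "finite Good" unfolding Good_def subspaces_of_dim_def
      by (rule finite_subset[of _ "Pow (Fqn n)"]) (auto simp: Fqn_finite)
    show "real (card (Phi ` P)) \<le> real (card Good)" using card_mono[OF fG img] by simp
    have "0 \<le> real (card (tuples (A \<inter> C) {} i)) * real (card (tuples A (A \<inter> C) r))" for A :: "(nat \<Rightarrow> 'a) set" by simp
    show "0 \<le> ff q i i * (\<Prod>t<r. q ^ d - q ^ i * q ^ t)"
    proof -
      have "\<And>t. t < r \<Longrightarrow> 0 \<le> q ^ d - q ^ i * q ^ t" unfolding q_def r_def using Q2 id
        by (auto simp: power_add[symmetric] intro!: power_increasing)
      moreover have "\<And>t. t < i \<Longrightarrow> 0 \<le> q ^ i - q ^ t" unfolding q_def using Q2
        by (auto intro!: power_increasing)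
      ultimately show ?thesis unfolding ff_def by (intro mult_nonneg_nonneg prod_nonneg) auto
    qed
  qed
  finally have "real (card P) \<le> real (card Good) * (ff q i i * (\<Prod>t<r. q ^ d - q ^ i * q ^ t))" .
  moreover have "real (card Tg) * (\<Prod>t<r. q ^ n - q ^ K * q ^ t) \<le> real (card P)"
  proof -
    have "real (card Tg) * (\<Prod>t<r. q ^ n - q ^ K * q ^ t) \<le> real (card Tg) * real (card W)"
      using cW by (intro mult_left_mono) auto
    then show ?thesis unfolding P_def by (simp add: card_cartesian_product)
  qed
  ultimately show ?thesis unfolding Tg_def Good_def q_def Q_def r_def K_def by linarith
qed



lemma ff_Suc: "ff q m (Suc j) = ff q m j * (q ^ m - q ^ j)"
  by (simp add: ff_def)

lemma ff_Suc_Suc: "ff q (Suc m) (Suc j) = (q ^ Suc m - 1) * q ^ j * ff q m j"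
proof -
  have "ff q (Suc m) (Suc j) = (q ^ Suc m - q ^ 0) * (\<Prod>t<j. q ^ Suc m - q ^ Suc t)"
    unfolding ff_def by (rule prod.lessThan_Suc_shift)
  also have "(\<Prod>t<j. q ^ Suc m - q ^ Suc t) = (\<Prod>t<j. q * (q ^ m - q ^ t))"
    by (rule prod.cong) (auto simp: algebra_simps)
  also have "\<dots> = q ^ j * ff q m j" unfolding ff_def by (simp add: prod.distrib)
  finally show ?thesis by simp
qed

lemma ff_diff: "ff q (Suc m) (Suc j) - ff q m (Suc j) = q ^ m * (q ^ Suc j - 1) * ff q m j"
  unfolding ff_Suc_Suc[of q m j] ff_Suc[of q m j] by (simp add: algebra_simps power_add[symmetric])

lemma ff_int_prod:
  assumes "r \<le> m"
  shows "ff q m r = (\<Prod>t<r. q ^ t) * (\<Prod>t\<in>{int m - int r + 1..int m}. q ^ nat t - 1)"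
  using assms
proof (induction r)
  case 0 then show ?case by (simp add: ff_def)
next
  case (Suc r)
  define f where "f t = q ^ nat t - 1" for t :: int
  have e: "{int m - int (Suc r) + 1..int m} = insert (int m - int r) {int m - int r + 1..int m}" by auto
  have pe: "(\<Prod>t\<in>{int m - int (Suc r) + 1..int m}. f t) = f (int m - int r) * (\<Prod>t\<in>{int m - int r + 1..int m}. f t)"
    unfolding e by (rule prod.insert) auto
  have fe: "f (int m - int r) = q ^ (m - r) - 1" unfolding f_def
    by (metis nat_minus_as_int nat_int)
  have "ff q m (Suc r) = ff q m r * (q ^ m - q ^ r)" by (rule ff_Suc)
  also have "q ^ m - q ^ r = q ^ r * (q ^ (m - r) - 1)"
    using Suc.prems by (simp add: algebra_simps power_add[symmetric])
  also have "ff q m r = (\<Prod>t<r. q ^ t) * (\<Prod>t\<in>{int m - int r + 1..int m}. f t)"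
    using Suc unfolding f_def by simp
  finally show ?case unfolding f_def[symmetric] pe fe by (simp add: algebra_simps)
qed

lemma gauss_ff:
  assumes "r \<le> m" and Q: "Q \<ge> (2::nat)"
  shows "gauss Q (int m) (int r) * ff (real Q) r r = ff (real Q) m r"
proof -
  define N where "N = (\<Prod>t\<in>{int m - int r + 1..int m}. real Q ^ nat t - 1)"
  define D where "D = (\<Prod>t\<in>{1..int r}. real Q ^ nat t - 1)"
  have D0: "D \<noteq> 0" unfolding D_def
  proof (subst prod_zero_iff, simp, safe)
    fix t assume "t \<in> {1..int r}" "real Q ^ nat t - 1 = 0"
    moreover from this have "nat t \<ge> 1" by auto
    then have "real Q ^ nat t > 1" using Q by (intro one_less_power) auto
    ultimately show False by simp
  qed
  have g: "gauss Q (int m) (int r) = N / D" unfolding gauss_def N_def D_def using assms by auto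
  have "ff (real Q) r r = (\<Prod>t<r. real Q ^ t) * D" unfolding D_def using ff_int_prod[of r r] by simp
  moreover have "ff (real Q) m r = (\<Prod>t<r. real Q ^ t) * N" unfolding N_def using ff_int_prod[OF assms(1)] by simp
  ultimately show ?thesis using g D0 by simp
qed

lemma ff_diff_gauss:
  assumes "1 \<le> i" "i \<le> k" "Q \<ge> (2::nat)"
  shows "ff (real Q) k i - ff (real Q) (k-1) i = real Q ^ (k-i) * gauss Q (int (k-1)) (int (i-1)) * ff (real Q) i i"
proof -
  define m where "m = k - 1"
  define j where "j = i - 1"
  have mj: "k = Suc m" "i = Suc j" using assms unfolding m_def j_def by auto
  have jm: "j \<le> m" using assms mj by simp
  define x where "x = real Q"
  have "ff x k i - ff x (k-1) i = x ^ m * (x ^ Suc j - 1) * ff x m j" unfolding mj by (simp add: ff_diff)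
  also have "ff x m j = gauss Q (int m) (int j) * ff x j j" unfolding x_def using gauss_ff[OF jm assms(3)] by simp
  also have "x ^ m = x ^ (m - j) * x ^ j" using jm by (simp add: power_add[symmetric])
  finally have "ff x k i - ff x (k-1) i = x ^ (m - j) * gauss Q (int m) (int j) * ((x ^ Suc j - 1) * x ^ j * ff x j j)"
    by (simp add: algebra_simps)
  also have "(x ^ Suc j - 1) * x ^ j * ff x j j = ff x i i" unfolding mj by (simp add: ff_Suc_Suc)
  finally show ?thesis unfolding x_def mj by simp
qed

lemma prod_shift_pow:
  fixes x :: real
  assumes "K \<le> n"
  shows "(\<Prod>t<r. x ^ n - x ^ K * x ^ t) = x ^ (r * K) * ff x (n - K) r"
proof -
  have xn: "x ^ n = x ^ K * x ^ (n - K)" using assms by (simp add: power_add[symmetric])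
  have "(\<Prod>t<r. x ^ n - x ^ K * x ^ t) = (\<Prod>t<r. x ^ K * (x ^ (n - K) - x ^ t))"
    unfolding xn by (simp add: right_diff_distrib)
  also have "\<dots> = (x ^ K) ^ r * ff x (n - K) r" unfolding ff_def by (simp add: prod.distrib)
  finally show ?thesis by (simp add: power_mult[symmetric] mult.commute)
qed

lemma part_i:
  fixes i d k s n :: nat
  assumes hi: "1 \<le> i" "i \<le> d" and hdk: "d < k" and hs: "s \<ge> 1" and hn: "(s+1)*k + (d - i) \<le> n"
  shows "disjunct (subspaces_of_dim n d :: (nat \<Rightarrow> 'a::{field,finite}) set set) (subspaces_of_dim n k)
              (Mq_entry i) s (ebar2 CARD('a) i d k n s)"
  unfolding disjunct_def
proof (intro ballI allI impI)
  fix C :: "(nat \<Rightarrow> 'a) set" and Cs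
  assume C: "C \<in> subspaces_of_dim n k" and Cs: "Cs \<subseteq> subspaces_of_dim n k \<and> C \<notin> Cs \<and> card Cs = s"
  define Q where "Q = CARD('a)"
  define x where "x = real Q"
  define r where "r = d - i"
  define K where "K = (s+1)*k"
  have Q2: "Q \<ge> 2" unfolding Q_def by (rule q_ge2)
  have x1: "x > 1" unfolding x_def using Q2 by simp
  have k2: "k \<ge> 2" using hi hdk by simp
  define Tg where "Tg = card {bs \<in> tuples C {} i. \<forall>B\<in>Cs. \<not> set bs \<subseteq> B}"
  define Good where "Good = card {A\<in>subspaces_of_dim n d. Mq_entry i A C \<and> (\<forall>B\<in>Cs. \<not> Mq_entry i A B)}"
  define L where "L = ff x k i - ff x (k-1) i - (real s - 1) * (ff x (k-1) i - ff x (k-2) i)"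
  define Pn where "Pn = (\<Prod>t<r. x ^ n - x ^ K * x ^ t)"
  define Pd where "Pd = (\<Prod>t<r. x ^ d - x ^ i * x ^ t)"
  have LT: "L \<le> real Tg" unfolding L_def Tg_def x_def Q_def
    using goodT_bound[OF C] Cs hs k2 by auto
  have TG: "real Tg * Pn \<le> real Good * (ff x i i * Pd)" unfolding Tg_def Good_def Pn_def Pd_def x_def Q_def r_def K_def
    using good_bound[OF C _ _ _ hs] Cs hi hn by auto
  have KnN: "K \<le> n" "K + r \<le> n" "i \<le> K" using hn hi hdk unfolding K_def r_def by (auto intro: order_trans[OF _ mult_le_mono2])
  have Pn0: "Pn \<ge> 0" unfolding Pn_def
  proof (rule prod_nonneg)
    fix t assume "t \<in> {..<r}"
    then have "x ^ K * x ^ t \<le> x ^ n" using x1 KnN by (simp add: power_add[symmetric] power_increasing)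
    then show "0 \<le> x ^ n - x ^ K * x ^ t" by simp
  qed
  have Dpos: "ff x i i * Pd > 0"
  proof (intro mult_pos_pos)
    show "ff x i i > 0" unfolding ff_def using x1 by (intro prod_pos) (auto simp: power_strict_increasing)
    show "Pd > 0" unfolding Pd_def using x1 hi
      by (intro prod_pos) (auto simp: power_add[symmetric] power_strict_increasing r_def)
  qed
  define G where "G = gauss Q (int (n - K)) (int r)"
  define c2 where "c2 = x ^ (k - i) * gauss Q (int (k-1)) (int (i-1)) - (real s - 1) * x ^ (k - i - 1) * gauss Q (int (k-2)) (int (i-1))"
  have e2: "ebar2 CARD('a) i d k n s + 1 = x ^ (r * (K - i)) * G * c2"
  proof -
    have hK: "int (s + 1) * int k = int K" unfolding K_def by (simp only: of_nat_mult)
    have h1: "int n - int (s + 1) * int k = int (n - K)" unfolding hK using KnN(1) by simp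
    have h2: "int d - int i = int r" using hi unfolding r_def by simp
    have h3: "int k - 1 = int (k - 1)" "int i - 1 = int (i - 1)" "int k - 2 = int (k - 2)" using hi k2 by auto
    have "ebar2 CARD('a) i d k n s = x ^ ((d - i) * ((s + 1) * k - i)) * gauss Q (int n - int (s + 1) * int k) (int d - int i)
     * (x ^ (k - i) * gauss Q (int k - 1) (int i - 1)
        - (real s - 1) * x ^ (k - i - 1) * gauss Q (int k - 2) (int i - 1)) - 1"
      unfolding ebar2_def x_def Q_def by (rule refl)
    also have "\<dots> = x ^ (r * (K - i)) * G * c2 - 1"
      unfolding h1 h2 h3 r_def[symmetric] K_def[symmetric] G_def[symmetric] c2_def[symmetric] by (rule refl)
    finally show ?thesis by simp
  qed
  have I1: "ff x k i - ff x (k-1) i = x ^ (k-i) * gauss Q (int (k-1)) (int (i-1)) * ff x i i"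
    unfolding x_def by (rule ff_diff_gauss) (use hi hdk Q2 in auto)
  have I2: "ff x (k-1) i - ff x (k-1-1) i = x ^ (k-1-i) * gauss Q (int (k-1-1)) (int (i-1)) * ff x i i"
    unfolding x_def by (rule ff_diff_gauss) (use hi hdk Q2 in auto)
  have Lc: "L = c2 * ff x i i" unfolding L_def c2_def using I1 I2 by (simp add: algebra_simps numeral_2_eq_2)
  have I3: "Pn = x ^ (r * K) * ff x (n - K) r" unfolding Pn_def by (rule prod_shift_pow[OF KnN(1)])
  have I4: "Pd = x ^ (r * i) * ff x r r"
  proof -
    have "Pd = (\<Prod>t<r. x ^ d - x ^ i * x ^ t)" by (simp add: Pd_def)
    also have "\<dots> = x ^ (r * i) * ff x (d - i) r" using hi by (intro prod_shift_pow) auto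
    finally show ?thesis unfolding r_def by simp
  qed
  have I5: "G * ff x r r = ff x (n - K) r" unfolding G_def x_def using gauss_ff[of r "n - K" Q] KnN Q2 by simp
  have "(ebar2 CARD('a) i d k n s + 1) * (ff x i i * Pd) = L * Pn"
  proof -
    have "x ^ (r * (K - i)) * x ^ (r * i) = x ^ (r * K)" using KnN by (simp add: power_add[symmetric] algebra_simps)
    then show ?thesis unfolding e2 Lc I3 I4 I5[symmetric] by (simp add: algebra_simps)
  qed
  also have "\<dots> \<le> real Tg * Pn" using LT Pn0 by (rule mult_right_mono)
  also have "\<dots> \<le> real Good * (ff x i i * Pd)" by (rule TG)
  finally have "ebar2 CARD('a) i d k n s + 1 \<le> real Good" using Dpos by (rule mult_right_le_imp_le)
  then show "ebar2 CARD('a) i d k n s + 1 \<le> real (card {A \<in> subspaces_of_dim n d. Mq_entry i A C \<and> (\<forall>B\<in>Cs. \<not> Mq_entry i A B)})"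
    unfolding Good_def .
qed

lemma ff_pos:
  assumes "r \<le> m" "x > (1::real)"
  shows "ff x m r > 0"
  unfolding ff_def using assms by (intro prod_pos) (auto simp: power_strict_increasing)

lemma ff_ge:
  assumes "1 \<le> r" "r \<le> m" "x \<ge> (2::real)"
  shows "ff x m r \<ge> real m"
proof -
  obtain r' where r: "r = Suc r'" using assms by (cases r) auto
  have "ff x m r = (x ^ m - x ^ 0) * (\<Prod>t<r'. x ^ m - x ^ Suc t)"
    unfolding ff_def r by (rule prod.lessThan_Suc_shift)
  moreover have "(\<Prod>t<r'. x ^ m - x ^ Suc t) \<ge> 1"
  proof (rule prod_ge_1)
    fix t assume t: "t \<in> {..<r'}"
    then have "Suc (Suc t) \<le> m" using assms r by auto
    then have "x ^ Suc (Suc t) \<le> x ^ m" using assms by (intro power_increasing) auto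
    moreover have "x ^ Suc (Suc t) = x * x ^ Suc t" by simp
    moreover have "x ^ Suc t \<ge> 1" using assms by (intro one_le_power) auto
    moreover have "2 * x ^ Suc t \<le> x * x ^ Suc t" using assms by (intro mult_right_mono) auto
    ultimately show "1 \<le> x ^ m - x ^ Suc t" by linarith
  qed
  moreover have "x ^ m - 1 \<ge> real m"
  proof -
    have "m < 2 ^ m" by (rule less_exp)
    then have "real m + 1 \<le> 2 ^ m" by (metis Suc_leI of_nat_Suc of_nat_le_iff of_nat_numeral of_nat_power add.commute)
    also have "(2::real) ^ m \<le> x ^ m" using assms by (intro power_mono) auto
    finally show ?thesis by simp
  qed
  moreover have "x ^ m - 1 \<ge> 0" using assms by simp
  ultimately have "(x ^ m - 1) * 1 \<le> (x ^ m - 1) * (\<Prod>t<r'. x ^ m - x ^ Suc t)"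
    by (intro mult_left_mono) auto
  then show ?thesis using \<open>x ^ m - 1 \<ge> real m\<close> \<open>ff x m r = (x ^ m - x ^ 0) * (\<Prod>t<r'. x ^ m - x ^ Suc t)\<close> by simp
qed

lemma ring_aux:
  fixes P a G1 s1 xm F z w x :: real
  assumes "G1 * (P - z) = (P - 1) * z * F" "P - z = z * w" "P = x * xm"
  shows "(P * a * G1 - s1 * (xm * a * F)) * (P - z) = a * F * z * xm * (x * (P - 1) - s1 * w)"
proof -
  have "(P * a * G1 - s1 * (xm * a * F)) * (P - z) = a * P * (G1 * (P - z)) - s1 * xm * a * F * (P - z)"
    by (simp add: algebra_simps)
  also have "\<dots> = a * P * ((P - 1) * z * F) - s1 * xm * a * F * (z * w)" by (simp only: assms(1), simp only: assms(2))
  also have "\<dots> = a * F * z * (P * (P - 1)) - a * F * z * (s1 * xm * w)" by (simp add: algebra_simps)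
  also have "P * (P - 1) = xm * (x * (P - 1))" using assms(3) by simp
  finally show ?thesis by (simp add: algebra_simps)
qed

lemma E_pos:
  assumes Q: "Q \<ge> (2::nat)" and j: "1 \<le> j" "j < k"
    and hs: "(real s - 1) * (real Q ^ (k-j) - 1) < real Q * (real Q ^ (k-1) - 1)"
  shows "real Q ^ (k-j) * gauss Q (int (k-1)) (int (j-1)) - (real s - 1) * real Q ^ (k-j-1) * gauss Q (int (k-2)) (int (j-1)) > 0"
proof -
  define x where "x = real Q"
  have x2: "x \<ge> 2" unfolding x_def using Q by simp
  define m where "m = k - 2"
  define l where "l = j - 1"
  have km: "k = Suc (Suc m)" and jl: "j = Suc l" and lm: "l \<le> m" using j unfolding m_def l_def by auto
  define A1 where "A1 = x ^ (k-j) * gauss Q (int (k-1)) (int (j-1))"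
  define A2 where "A2 = x ^ (k-j-1) * gauss Q (int (k-2)) (int (j-1))"
  define E where "E = A1 - (real s - 1) * A2"
  have I1: "ff x k j - ff x (k-1) j = A1 * ff x j j"
    unfolding x_def A1_def by (rule ff_diff_gauss) (use j Q in auto)
  have I2': "ff x (k-1) j - ff x (k-1-1) j = x ^ (k-1-j) * gauss Q (int (k-1-1)) (int (j-1)) * ff x j j"
    unfolding x_def by (rule ff_diff_gauss) (use j Q in auto)
  have kk: "k - 1 - 1 = k - 2" "k - 1 - j = k - j - 1" by auto
  have I2: "ff x (k-1) j - ff x (k-2) j = A2 * ff x j j" using I2' unfolding kk A2_def .
  have EE: "E * ff x j j = (ff x k j - ff x (k-1) j) - (real s - 1) * (ff x (k-1) j - ff x (k-2) j)"
    unfolding E_def I1 I2 by (simp add: left_diff_distrib mult.assoc)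
  define F where "F = ff x m l"
  define G1 where "G1 = ff x (Suc m) l"
  define P where "P = x ^ Suc m"
  define z where "z = x ^ l"
  define w where "w = x ^ (Suc m - l) - 1"
  define a where "a = x ^ Suc l - 1"
  have Fp: "F > 0" unfolding F_def using lm x2 by (intro ff_pos) auto
  have zp: "z > 0" unfolding z_def using x2 by simp
  have "1 < x ^ Suc l" by (rule one_less_power) (use x2 in auto)
  then have ap: "a > 0" unfolding a_def by simp
  have "1 < x ^ (Suc m - l)" by (rule one_less_power) (use x2 lm in auto)
  then have wp: "w > 0" unfolding w_def by simp
  have Pz: "P - z = z * w"
  proof -
    have "P = x ^ l * x ^ (Suc m - l)" unfolding P_def using lm by (simp add: power_add[symmetric])
    then show ?thesis unfolding z_def w_def by (simp add: right_diff_distrib)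
  qed
  have d1: "ff x k j - ff x (k-1) j = P * a * G1" unfolding km jl P_def a_def G1_def
    using ff_diff[of x "Suc m" l] by simp
  have d2: "ff x (k-1) j - ff x (k-2) j = x ^ m * a * F" unfolding km jl a_def F_def
    using ff_diff[of x m l] by simp
  have two: "G1 * (P - z) = (P - 1) * z * F"
    using ff_Suc[of x "Suc m" l] ff_Suc_Suc[of x m l] unfolding P_def z_def F_def G1_def by simp
  have PP: "P = x * x ^ m" unfolding P_def by simp
  have "E * ff x j j * (P - z) = (P * a * G1 - (real s - 1) * (x ^ m * a * F)) * (P - z)"
    by (simp only: EE d1 d2)
  also have "\<dots> = a * F * z * x ^ m * (x * (P - 1) - (real s - 1) * w)"
    by (rule ring_aux[OF two Pz PP])
  finally have eq: "E * ff x j j * (P - z) = a * F * z * x ^ m * (x * (P - 1) - (real s - 1) * w)" .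
  have "x * (P - 1) - (real s - 1) * w > 0"
  proof -
    have "Suc m - l = k - j" "Suc m = k - 1" using km jl by auto
    then show ?thesis using hs unfolding P_def w_def x_def by simp
  qed
  then have "a * F * z * x ^ m * (x * (P - 1) - (real s - 1) * w) > 0" using ap Fp zp x2 by simp
  then have pos: "E * ff x j j * (P - z) > 0" unfolding eq .
  have f0: "ff x j j > 0" using x2 by (intro ff_pos) auto
  have p0: "P - z > 0" unfolding Pz using zp wp by simp
  have "E * ff x j j > 0" using pos p0 by (simp add: zero_less_mult_iff)
  then have "E > 0" using f0 by (simp add: zero_less_mult_iff)
  then show ?thesis unfolding E_def A1_def A2_def x_def by (simp add: mult.assoc)
qed

lemma ebar2_eq:
  assumes hi: "1 \<le> i" "i \<le> d" and k2: "k \<ge> 2" and KnN: "(s+1)*k \<le> n"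
  shows "ebar2 Q i d k n s + 1 = real Q ^ ((d - i) * ((s+1)*k - i)) * gauss Q (int (n - (s+1)*k)) (int (d - i))
     * (real Q ^ (k - i) * gauss Q (int (k-1)) (int (i-1)) - (real s - 1) * real Q ^ (k - i - 1) * gauss Q (int (k-2)) (int (i-1)))"
proof -
  have hK: "int (s + 1) * int k = int ((s+1)*k)" by (simp only: of_nat_mult)
  have h1: "int n - int (s + 1) * int k = int (n - (s+1)*k)" unfolding hK using KnN by simp
  have h2: "int d - int i = int (d - i)" using hi by simp
  have h3: "int k - 1 = int (k - 1)" "int i - 1 = int (i - 1)" "int k - 2 = int (k - 2)" using hi k2 by auto
  show ?thesis unfolding ebar2_def h1 h2 h3 by simp
qed

lemma ebar1_eq:
  assumes "1 \<le> d" "k \<ge> 2"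
  shows "ebar1 Q d k s + 1 = real Q ^ (k - d) * gauss Q (int (k-1)) (int (d-1)) - (real s - 1) * real Q ^ (k - d - 1) * gauss Q (int (k-2)) (int (d-1))"
proof -
  have h3: "int k - 1 = int (k - 1)" "int d - 1 = int (d - 1)" "int k - 2 = int (k - 2)" using assms by auto
  show ?thesis unfolding ebar1_def h3 by simp
qed

lemma part_ii:
  assumes Q2: "Q \<ge> (2::nat)" and hi: "1 \<le> i" "i < d" and hdk: "d < k" and hs: "1 \<le> s"
    "real s \<le> real Q * (real Q ^ (k - 1) - 1) / (real Q ^ (k - i) - 1)"
  shows "filterlim (\<lambda>n. (ebar2 Q i d k n s + 1) / (ebar1 Q d k s + 1)) at_top sequentially"
proof -
  define x where "x = real Q"
  define r where "r = d - i"
  define K where "K = (s+1)*k"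
  have x2: "x \<ge> 2" unfolding x_def using Q2 by simp
  have k2: "k \<ge> 2" using hi hdk by simp
  have r1: "r \<ge> 1" unfolding r_def using hi by simp
  have "1 < x ^ (k - i)" by (rule one_less_power) (use x2 hi hdk in auto)
  then have den: "x ^ (k - i) - 1 > 0" by simp
  have hs1: "real s * (x ^ (k - i) - 1) \<le> x * (x ^ (k - 1) - 1)"
    using hs(2) den unfolding x_def by (simp add: le_divide_eq)
  have sd: "real s - 1 \<ge> 0" using hs by simp
  have hsi: "(real s - 1) * (x ^ (k - i) - 1) < x * (x ^ (k - 1) - 1)"
  proof -
    have "(real s - 1) * (x ^ (k - i) - 1) < real s * (x ^ (k - i) - 1)" using den by simp
    then show ?thesis using hs1 by linarith
  qed
  have hsd: "(real s - 1) * (x ^ (k - d) - 1) < x * (x ^ (k - 1) - 1)"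
  proof -
    have "x ^ (k - d) \<le> x ^ (k - i)" using x2 hi by (intro power_increasing) auto
    then have "(real s - 1) * (x ^ (k - d) - 1) \<le> (real s - 1) * (x ^ (k - i) - 1)"
      using sd by (intro mult_left_mono) auto
    then show ?thesis using hsi by linarith
  qed
  define c2 where "c2 = x ^ (k - i) * gauss Q (int (k-1)) (int (i-1)) - (real s - 1) * x ^ (k - i - 1) * gauss Q (int (k-2)) (int (i-1))"
  define c1 where "c1 = x ^ (k - d) * gauss Q (int (k-1)) (int (d-1)) - (real s - 1) * x ^ (k - d - 1) * gauss Q (int (k-2)) (int (d-1))"
  have c2p: "c2 > 0" unfolding c2_def x_def by (rule E_pos[OF Q2]) (use hi hdk hsi x_def in auto)
  have c1p: "c1 > 0" unfolding c1_def x_def by (rule E_pos[OF Q2]) (use hi hdk hsd x_def in auto)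
  have e1: "ebar1 Q d k s + 1 = c1" unfolding c1_def x_def by (rule ebar1_eq) (use hi k2 in auto)
  define M where "M = x ^ (r * (K - i))"
  have Mp: "M > 0" unfolding M_def using x2 by simp
  have ffr: "ff x r r > 0" using x2 by (intro ff_pos) auto
  define C0 where "C0 = M * c2 / (c1 * ff x r r)"
  have C0p: "C0 > 0" unfolding C0_def using Mp c2p c1p ffr by simp
  have bound: "C0 * (real n - real K) \<le> (ebar2 Q i d k n s + 1) / (ebar1 Q d k s + 1)" if n: "n \<ge> K + r" for n
  proof -
    have Kn: "K \<le> n" using n by simp
    have "ebar2 Q i d k n s + 1 = M * gauss Q (int (n - K)) (int r) * c2"
      unfolding M_def c2_def r_def K_def x_def using ebar2_eq[of i d k s n Q] hi k2 Kn unfolding K_def by simp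
    moreover have "gauss Q (int (n - K)) (int r) = ff x (n - K) r / ff x r r"
      using gauss_ff[of r "n - K" Q] n Q2 ffr unfolding x_def by (simp add: eq_divide_eq)
    moreover have "ff x (n - K) r \<ge> real (n - K)" using r1 n x2 by (intro ff_ge) auto
    moreover have "real (n - K) = real n - real K" using Kn by simp
    ultimately have eq: "(ebar2 Q i d k n s + 1) / (ebar1 Q d k s + 1) = C0 * ff x (n - K) r"
      and ge: "ff x (n - K) r \<ge> real n - real K"
      unfolding e1 C0_def using c1p ffr by (auto simp: field_simps)
    show ?thesis unfolding eq using ge C0p by (intro mult_left_mono) auto
  qed
  have lim: "filterlim (\<lambda>n. C0 * (real n - real K)) at_top sequentially"
  proof (rule filterlim_tendsto_pos_mult_at_top[OF tendsto_const C0p])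
    have "filterlim (\<lambda>n. - real K + real n) at_top sequentially"
      by (rule filterlim_tendsto_add_at_top[OF tendsto_const filterlim_real_sequentially])
    then show "filterlim (\<lambda>n. real n - real K) at_top sequentially" by simp
  qed
  show ?thesis
  proof (rule filterlim_at_top_mono[OF lim])
    show "eventually (\<lambda>n. C0 * (real n - real K) \<le> (ebar2 Q i d k n s + 1) / (ebar1 Q d k s + 1)) sequentially"
      using bound by (intro eventually_sequentiallyI[of "K + r"]) auto
  qed
qed

theorem theorem1p5:
  fixes q i d k s :: nat
  assumes field: "q = card (UNIV :: 'a::{field,finite} set)"
    and hi: "1 \<le> i" "i < (d + 1) div 2"
    and hdk: "d < k"
    and hs: "1 \<le> s" "real s \<le> real q * (real q ^ (k - 1) - 1) / (real q ^ (k - i) - 1)"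
  shows "(\<forall>n. int n - int (s + 1) * int k \<ge> int d - int i \<longrightarrow>
            disjunct (subspaces_of_dim n d :: (nat \<Rightarrow> 'a) set set) (subspaces_of_dim n k)
              (Mq_entry i) s (ebar2 q i d k n s))
       \<and> filterlim (\<lambda>n. (ebar2 q i d k n s + 1) / (ebar1 q d k s + 1)) at_top sequentially"
proof
  have id: "i < d" using hi by linarith
  show "\<forall>n. int n - int (s + 1) * int k \<ge> int d - int i \<longrightarrow>
            disjunct (subspaces_of_dim n d :: (nat \<Rightarrow> 'a) set set) (subspaces_of_dim n k)
              (Mq_entry i) s (ebar2 q i d k n s)"
  proof (intro allI impI)
    fix n assume hn: "int n - int (s + 1) * int k \<ge> int d - int i"
    have e1: "int ((s+1)*k + (d - i)) = int (s + 1) * int k + (int d - int i)" using id by (simp add: of_nat_diff distrib_right)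
    have "int ((s+1)*k + (d - i)) \<le> int n" unfolding e1 using hn by linarith
    then have "(s+1)*k + (d - i) \<le> n" by (simp only: of_nat_le_iff)
    then show "disjunct (subspaces_of_dim n d :: (nat \<Rightarrow> 'a) set set) (subspaces_of_dim n k)
              (Mq_entry i) s (ebar2 q i d k n s)"
      unfolding field using part_i[of i d k s n] hi(1) id hdk hs(1) by auto
  qed
  show "filterlim (\<lambda>n. (ebar2 q i d k n s + 1) / (ebar1 q d k s + 1)) at_top sequentially"
    by (rule part_ii) (use hi id hdk hs field q_ge2[where 'a='a] in auto)
qed

end
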